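(* Let $\Psi,\Omega\subseteq\mathbb{F}[x;\sigma,\delta]$ be finite non-empty sets of skew polynomials of degree at least $1$ such that $\Psi\le\Omega$. If $\Omega$ is P-independent, then so is $\Psi$.
   Context: Let $\mathbb{F}$ be a division ring, $\sigma$ a ring endomorphism of $\mathbb{F}$ and $\delta$ a $\sigma$-derivation; $\mathbb{F}[x;\sigma,\delta]$ is the skew polynomial ring with $xa=\sigma(a)x+\delta(a)$ (a domain with right Euclidean division). For sets $\Psi,\Omega$ of skew polynomials, $\Psi\le\Omega$ means: for every finite non-empty subset $\{Q_1,\dots,Q_n\}\subseteq\Psi$ of size $n$ there is a subset $\{P_1,\dots,P_n\}\subseteq\Omega$ of size $n$ with $Q_i$ dividing $P_i$ on the right for each $i$. For a set $\Omega$, $I(\Omega)$ is the left ideal of skew polynomials right-divisible by every element of $\Omega$, $F_\Omega$ its monic generator of minimal degree (or $0$). $\Omega$ is P-independent if it is finite, $I(\Omega)\neq\{0\}$, and $\deg F_\Omega=\sum_{P\in\Omega}\deg P$. *)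

theory Defs
  imports "HOL-Computational_Algebra.Polynomial"
begin

text \<open>Skew polynomial ring F[x;sigma,delta] over a division ring F, represented by
  coefficient polynomials (p = sum of p_i x^i, coefficients on the left), with the
  multiplication determined by x a = sigma(a) x + delta(a).\<close>

definition ring_endo :: "('a::division_ring \<Rightarrow> 'a) \<Rightarrow> bool" where
  "ring_endo \<sigma> \<longleftrightarrow> \<sigma> 1 = 1 \<and> (\<forall>a b. \<sigma> (a + b) = \<sigma> a + \<sigma> b) \<and> (\<forall>a b. \<sigma> (a * b) = \<sigma> a * \<sigma> b)"

definition sigma_derivation :: "('a::division_ring \<Rightarrow> 'a) \<Rightarrow> ('a \<Rightarrow> 'a) \<Rightarrow> bool" where
  "sigma_derivation \<sigma> \<delta> \<longleftrightarrow> (\<forall>a b. \<delta> (a + b) = \<delta> a + \<delta> b) \<and>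
      (\<forall>a b. \<delta> (a * b) = \<sigma> a * \<delta> b + \<delta> a * b)"

text \<open>Left multiplication by x: x (sum a_i x^i) = sum (sigma(a_i) x^(i+1) + delta(a_i) x^i).\<close>
definition skew_xmul :: "('a::division_ring \<Rightarrow> 'a) \<Rightarrow> ('a \<Rightarrow> 'a) \<Rightarrow> 'a poly \<Rightarrow> 'a poly" where
  "skew_xmul \<sigma> \<delta> q = pCons 0 (map_poly \<sigma> q) + map_poly \<delta> q"

definition skew_mult :: "('a::division_ring \<Rightarrow> 'a) \<Rightarrow> ('a \<Rightarrow> 'a) \<Rightarrow> 'a poly \<Rightarrow> 'a poly \<Rightarrow> 'a poly" where
  "skew_mult \<sigma> \<delta> p q = (\<Sum>i\<le>degree p. map_poly (\<lambda>b. coeff p i * b) ((skew_xmul \<sigma> \<delta> ^^ i) q))"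

definition skew_rdvd :: "('a::division_ring \<Rightarrow> 'a) \<Rightarrow> ('a \<Rightarrow> 'a) \<Rightarrow> 'a poly \<Rightarrow> 'a poly \<Rightarrow> bool" where
  "skew_rdvd \<sigma> \<delta> Q P \<longleftrightarrow> (\<exists>R. P = skew_mult \<sigma> \<delta> R Q)"

definition skew_le :: "('a::division_ring \<Rightarrow> 'a) \<Rightarrow> ('a \<Rightarrow> 'a) \<Rightarrow> 'a poly set \<Rightarrow> 'a poly set \<Rightarrow> bool" where
  "skew_le \<sigma> \<delta> \<Psi> \<Omega> \<longleftrightarrow> (\<forall>S. S \<subseteq> \<Psi> \<and> finite S \<and> S \<noteq> {} \<longrightarrow>
      (\<exists>T f. T \<subseteq> \<Omega> \<and> bij_betw f S T \<and> (\<forall>Q\<in>S. skew_rdvd \<sigma> \<delta> Q (f Q))))"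

definition skew_I :: "('a::division_ring \<Rightarrow> 'a) \<Rightarrow> ('a \<Rightarrow> 'a) \<Rightarrow> 'a poly set \<Rightarrow> 'a poly set" where
  "skew_I \<sigma> \<delta> \<Omega> = {F. \<forall>P\<in>\<Omega>. skew_rdvd \<sigma> \<delta> P F}"

definition skew_F :: "('a::division_ring \<Rightarrow> 'a) \<Rightarrow> ('a \<Rightarrow> 'a) \<Rightarrow> 'a poly set \<Rightarrow> 'a poly" where
  "skew_F \<sigma> \<delta> \<Omega> = (if skew_I \<sigma> \<delta> \<Omega> = {0} then 0 else
     (SOME F. F \<in> skew_I \<sigma> \<delta> \<Omega> \<and> lead_coeff F = 1 \<and>
        (\<forall>G\<in>skew_I \<sigma> \<delta> \<Omega>. G \<noteq> 0 \<longrightarrow> degree F \<le> degree G)))"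

definition P_independent :: "('a::division_ring \<Rightarrow> 'a) \<Rightarrow> ('a \<Rightarrow> 'a) \<Rightarrow> 'a poly set \<Rightarrow> bool" where
  "P_independent \<sigma> \<delta> \<Omega> \<longleftrightarrow> finite \<Omega> \<and> skew_I \<sigma> \<delta> \<Omega> \<noteq> {0} \<and>
     degree (skew_F \<sigma> \<delta> \<Omega>) = (\<Sum>P\<in>\<Omega>. degree P)"

end

theory Submission imports Defs begin

definition cm :: "'a::division_ring \<Rightarrow> 'a poly \<Rightarrow> 'a poly" where
  "cm c q = map_poly (\<lambda>b. c * b) q"

locale skew =
  fixes \<sigma> \<delta> :: "'a::division_ring \<Rightarrow> 'a"
  assumes endo: "ring_endo \<sigma>" and der: "sigma_derivation \<sigma> \<delta>"
begin

abbreviation sm where "sm \<equiv> skew_mult \<sigma> \<delta>"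
abbreviation xm where "xm \<equiv> skew_xmul \<sigma> \<delta>"

lemma s_add[simp]: "\<sigma> (a + b) = \<sigma> a + \<sigma> b" using endo by (simp add: ring_endo_def)
lemma s_mult[simp]: "\<sigma> (a * b) = \<sigma> a * \<sigma> b" using endo by (simp add: ring_endo_def)
lemma s_one[simp]: "\<sigma> 1 = 1" using endo by (simp add: ring_endo_def)
lemma d_add[simp]: "\<delta> (a + b) = \<delta> a + \<delta> b" using der by (simp add: sigma_derivation_def)
lemma d_mult[simp]: "\<delta> (a * b) = \<sigma> a * \<delta> b + \<delta> a * b" using der by (simp add: sigma_derivation_def)
lemma s_zero[simp]: "\<sigma> 0 = 0"
  using s_add[of 0 0] by simp
lemma d_zero[simp]: "\<delta> 0 = 0"
  using d_add[of 0 0] by simp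
lemma s_eq0[simp]: "\<sigma> a = 0 \<longleftrightarrow> a = 0"
proof
  assume "\<sigma> a = 0"
  show "a = 0"
  proof (rule ccontr)
    assume "a \<noteq> 0"
    then have "\<sigma> (a * inverse a) = 1" by simp
    then show False using \<open>\<sigma> a = 0\<close> by simp
  qed
qed simp
lemma spow_eq0[simp]: "(\<sigma> ^^ k) a = 0 \<longleftrightarrow> a = 0"
  by (induct k) auto

lemma coeff_cm[simp]: "coeff (cm c q) n = c * coeff q n"
  by (simp add: coeff_map_poly cm_def)
lemma coeff_xm: "coeff (xm q) n = (case n of 0 \<Rightarrow> 0 | Suc m \<Rightarrow> \<sigma> (coeff q m)) + \<delta> (coeff q n)"
  by (simp add: skew_xmul_def coeff_map_poly coeff_pCons split: nat.splits)

lemma xm_add: "xm (p + q) = xm p + xm q"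
  by (rule poly_eqI) (simp add: coeff_xm split: nat.splits)
lemma xm_0[simp]: "xm 0 = 0"
  by (simp add: skew_xmul_def)
lemma cm_add: "cm c (p + q) = cm c p + cm c q"
  by (rule poly_eqI) (simp add: distrib_left)
lemma cm_add_scalar: "cm (a + b) q = cm a q + cm b q"
  by (rule poly_eqI) (simp add: distrib_right)
lemma cm_0[simp]: "cm c 0 = 0" by (rule poly_eqI) simp
lemma cm_0s[simp]: "cm 0 q = 0" by (rule poly_eqI) simp
lemma cm_1[simp]: "cm 1 q = q" by (rule poly_eqI) simp
lemma cm_cm[simp]: "cm c (cm d q) = cm (c * d) q" by (rule poly_eqI) (simp add: mult.assoc)
lemma cm_pCons: "cm c (pCons a p) = pCons (c * a) (cm c p)"
  by (rule poly_eqI) (simp add: coeff_pCons split: nat.splits)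
lemma xm_cm: "xm (cm c y) = cm (\<sigma> c) (xm y) + cm (\<delta> c) y"
  by (rule poly_eqI) (simp add: coeff_xm distrib_left split: nat.splits)

lemma sm_bound:
  assumes "degree p \<le> N"
  shows "sm p q = (\<Sum>i\<le>N. cm (coeff p i) ((xm ^^ i) q))"
  unfolding skew_mult_def cm_def[symmetric]
  by (rule sum.mono_neutral_left) (use assms in \<open>auto simp: coeff_eq_0\<close>)

lemma sm_0_left[simp]: "sm 0 q = 0"
  using sm_bound[of 0 0 q] by simp

lemma sm_pCons: "sm (pCons a p) q = cm a q + sm p (xm q)"
proof -
  have "sm (pCons a p) q = (\<Sum>i\<le>Suc (degree p). cm (coeff (pCons a p) i) ((xm ^^ i) q))"
    by (rule sm_bound) (simp add: degree_pCons_le)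
  also have "\<dots> = cm a q + (\<Sum>i\<le>degree p. cm (coeff p i) ((xm ^^ i) (xm q)))"
    unfolding sum.atMost_Suc_shift by (simp add: funpow_Suc_right del: funpow.simps)
  also have "\<dots> = cm a q + sm p (xm q)" by (simp add: skew_mult_def cm_def)
  finally show ?thesis .
qed

lemma sm_add_right: "sm p (q1 + q2) = sm p q1 + sm p q2"
  by (induct p arbitrary: q1 q2) (simp_all add: sm_pCons xm_add cm_add algebra_simps)

lemma sm_0_right[simp]: "sm p 0 = 0"
  by (induct p) (simp_all add: sm_pCons)

lemma sm_add_left: "sm (p1 + p2) q = sm p1 q + sm p2 q"
proof (induct p1 arbitrary: p2 q)
  case 0 then show ?case by simp
next
  case (pCons a p)
  obtain b p' where "p2 = pCons b p'" by (rule pCons_cases)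
  then show ?case using pCons by (simp add: sm_pCons cm_add_scalar algebra_simps)
qed

lemma sm_cm_left: "sm (cm c p) q = cm c (sm p q)"
  by (induct p arbitrary: q) (simp_all add: sm_pCons cm_pCons cm_add)

lemma sm_const: "sm [:c:] q = cm c q" by (simp add: sm_pCons)
lemma sm_one[simp]: "sm [:1:] q = q" by (simp add: sm_pCons)

lemma sm_xm_left: "sm (xm p) q = sm (map_poly \<sigma> p) (xm q) + sm (map_poly \<delta> p) q"
  by (simp add: skew_xmul_def sm_add_left sm_pCons)

lemma xm_sm: "xm (sm p q) = sm (xm p) q"
proof (induct p arbitrary: q)
  case 0 then show ?case by simp
next
  case (pCons a p)
  have "xm (sm (pCons a p) q) = cm (\<sigma> a) (xm q) + cm (\<delta> a) q + sm (xm p) (xm q)"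
    using pCons by (simp add: sm_pCons xm_add xm_cm)
  also have "\<dots> = sm (xm (pCons a p)) q"
    by (simp only: sm_xm_left map_poly_pCons s_zero d_zero sm_pCons) (simp add: algebra_simps)
  finally show ?case .
qed

lemma sm_assoc: "sm (sm A B) C = sm A (sm B C)"
  by (induct A arbitrary: B) (simp_all add: sm_pCons sm_add_left sm_cm_left xm_sm)


lemma degree_cm_le: "degree (cm c q) \<le> degree q"
  by (rule degree_le) (simp add: coeff_eq_0)

lemma xm_deg:
  assumes "q \<noteq> 0"
  shows "degree (xm q) = Suc (degree q)" "lead_coeff (xm q) = \<sigma> (lead_coeff q)"
proof -
  have c: "coeff (xm q) (Suc (degree q)) = \<sigma> (lead_coeff q)"
    by (simp add: coeff_xm coeff_eq_0)
  have "\<sigma> (lead_coeff q) \<noteq> 0" using assms by simp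
  then have "Suc (degree q) \<le> degree (xm q)" using c le_degree by metis
  moreover have "degree (xm q) \<le> Suc (degree q)"
    by (rule degree_le) (auto simp: coeff_xm coeff_eq_0 split: nat.splits)
  ultimately show d: "degree (xm q) = Suc (degree q)" by simp
  show "lead_coeff (xm q) = \<sigma> (lead_coeff q)" using c d by simp
qed

lemma sm_deg_aux:
  "degree (sm p q) \<le> degree p + degree q \<and>
   coeff (sm p q) (degree p + degree q) = lead_coeff p * (\<sigma> ^^ degree p) (lead_coeff q)"
proof (induct p arbitrary: q)
  case 0 then show ?case by simp
next
  case (pCons a p)
  show ?case
  proof (cases "q = 0")
    case True then show ?thesis by simp
  next
    case qnz: False
    show ?thesis
    proof (cases "p = 0")
      case True
      then show ?thesis using degree_cm_le[of a q] by (simp add: sm_pCons)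
    next
      case pnz: False
      have IH: "degree (sm p (xm q)) \<le> degree p + Suc (degree q)"
        "coeff (sm p (xm q)) (degree p + Suc (degree q)) = lead_coeff p * (\<sigma> ^^ Suc (degree p)) (lead_coeff q)"
        using pCons(2)[of "xm q"] xm_deg[OF qnz] by (simp_all add: funpow_Suc_right del: funpow.simps)
      have "degree (cm a q) \<le> degree p + Suc (degree q)" using degree_cm_le[of a q] by simp
      then have "degree (sm (pCons a p) q) \<le> degree p + Suc (degree q)"
        using IH(1) by (simp add: sm_pCons degree_add_le)
      moreover have "coeff (cm a q) (degree p + Suc (degree q)) = 0" by (simp add: coeff_eq_0)
      ultimately show ?thesis using pnz IH(2) by (simp add: sm_pCons del: funpow.simps)
    qed
  qed
qed

lemma sm_nz:
  assumes "p \<noteq> 0" "q \<noteq> 0"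
  shows "sm p q \<noteq> 0" "degree (sm p q) = degree p + degree q"
proof -
  have "coeff (sm p q) (degree p + degree q) \<noteq> 0"
    using sm_deg_aux[of p q] assms by simp
  then have "degree p + degree q \<le> degree (sm p q)" "sm p q \<noteq> 0" using le_degree by auto
  then show "sm p q \<noteq> 0" "degree (sm p q) = degree p + degree q"
    using sm_deg_aux[of p q] by auto
qed

lemma sm_lc: "lead_coeff p \<noteq> 0 \<Longrightarrow> q \<noteq> 0 \<Longrightarrow> lead_coeff (sm p q) = lead_coeff p * (\<sigma> ^^ degree p) (lead_coeff q)"
  using sm_nz[of p q] sm_deg_aux[of p q] by auto

lemma deg_drop: "degree p \<le> n \<Longrightarrow> coeff p n = 0 \<Longrightarrow> p = 0 \<or> degree p < n"
  by (metis le_neq_implies_less leading_coeff_0_iff)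

lemma division:
  assumes "B \<noteq> 0"
  shows "\<exists>A r. C = sm A B + r \<and> (r = 0 \<or> degree r < degree B)"
proof (induct "degree C" arbitrary: C rule: less_induct)
  case less
  show ?case
  proof (cases "C = 0 \<or> degree C < degree B")
    case True
    then show ?thesis by (intro exI[of _ 0] exI[of _ C]) auto
  next
    case False
    then have Cnz: "C \<noteq> 0" and le: "degree B \<le> degree C" by auto
    define k where "k = degree C - degree B"
    define c where "c = lead_coeff C * inverse ((\<sigma> ^^ k) (lead_coeff B))"
    have lBnz: "(\<sigma> ^^ k) (lead_coeff B) \<noteq> 0" using assms by simp
    have cnz: "c \<noteq> 0" using Cnz lBnz by (simp add: c_def)
    define M where "M = sm (monom c k) B"
    have mnz: "monom c k \<noteq> 0" using cnz by simp
    have dM: "degree M = degree C"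
      using sm_nz(2)[OF mnz assms] le by (simp add: M_def degree_monom_eq[OF cnz] k_def)
    have lM: "lead_coeff M = lead_coeff C"
    proof -
      have "lead_coeff M = c * (\<sigma> ^^ k) (lead_coeff B)"
        using sm_lc[of "monom c k" B] cnz assms by (simp add: M_def degree_monom_eq[OF cnz])
      also have "\<dots> = lead_coeff C" using lBnz by (simp add: c_def mult.assoc)
      finally show ?thesis .
    qed
    define C' where "C' = C - M"
    have "degree C' \<le> degree C" unfolding C'_def using dM by (simp add: degree_diff_le)
    moreover have "coeff C' (degree C) = 0" using lM dM by (simp add: C'_def)
    ultimately have "C' = 0 \<or> degree C' < degree C" by (rule deg_drop)
    then show ?thesis
    proof
      assume "C' = 0"
      then show ?thesis by (intro exI[of _ "monom c k"] exI[of _ 0]) (simp add: C'_def M_def)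
    next
      assume "degree C' < degree C"
      from less[OF this] obtain A r where "C' = sm A B + r" "r = 0 \<or> degree r < degree B" by blast
      moreover have "C = M + C'" by (simp add: C'_def)
      ultimately have "C = sm (monom c k + A) B + r"
        by (simp add: sm_add_left M_def add.assoc)
      then show ?thesis using \<open>r = 0 \<or> degree r < degree B\<close> by blast
    qed
  qed
qed

lemma ore:
  assumes "C \<noteq> 0" "B \<noteq> 0"
  shows "\<exists>U V. U \<noteq> 0 \<and> sm U C = sm V B \<and> degree U \<le> degree B"
  using assms
proof (induct "degree B" arbitrary: B C rule: less_induct)
  case less
  obtain A r where Cd: "C = sm A B + r" and r: "r = 0 \<or> degree r < degree B"
    using division[OF less(3)] by blast
  show ?case
  proof (cases "r = 0")
    case True
    then show ?thesis using Cd by (intro exI[of _ "[:1:]"] exI[of _ A]) simp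
  next
    case rnz: False
    then have dr: "degree r < degree B" using r by simp
    from less(1)[OF dr less(3) rnz] obtain U' V' where
      U': "U' \<noteq> 0" "sm U' B = sm V' r" "degree U' \<le> degree r" by blast
    have V'nz: "V' \<noteq> 0"
    proof
      assume "V' = 0"
      then have "sm U' B = 0" using U' by simp
      then show False using sm_nz(1)[OF U'(1) less(3)] by simp
    qed
    have "degree U' + degree B = degree V' + degree r"
      using sm_nz(2)[OF U'(1) less(3)] sm_nz(2)[OF V'nz rnz] U'(2) by simp
    then have "degree V' \<le> degree B" using U'(3) by linarith
    moreover have "sm V' C = sm (sm V' A + U') B"
      using U'(2) by (simp add: Cd sm_add_right sm_add_left sm_assoc)
    ultimately show ?thesis using V'nz by blast
  qed
qed


lemma rdvd_mult: "skew_rdvd \<sigma> \<delta> P F \<Longrightarrow> skew_rdvd \<sigma> \<delta> P (sm U F)"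
  unfolding skew_rdvd_def by (auto simp: sm_assoc[symmetric])

lemma I_mult: "F \<in> skew_I \<sigma> \<delta> S \<Longrightarrow> sm U F \<in> skew_I \<sigma> \<delta> S"
  unfolding skew_I_def by (auto intro: rdvd_mult)

lemma step_A:
  assumes "L \<in> skew_I \<sigma> \<delta> S" "L \<noteq> 0" "P \<noteq> 0"
  shows "\<exists>M\<in>skew_I \<sigma> \<delta> (insert P S). M \<noteq> 0 \<and> degree M \<le> degree L + degree P"
proof -
  obtain U V where UV: "U \<noteq> 0" "sm U L = sm V P" "degree U \<le> degree P"
    using ore[OF assms(2,3)] by blast
  have "sm U L \<in> skew_I \<sigma> \<delta> S" using I_mult[OF assms(1)] .
  moreover have "skew_rdvd \<sigma> \<delta> P (sm U L)" using UV(2) by (auto simp: skew_rdvd_def)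
  ultimately have "sm U L \<in> skew_I \<sigma> \<delta> (insert P S)" by (simp add: skew_I_def)
  moreover have "sm U L \<noteq> 0" "degree (sm U L) = degree U + degree L"
    using sm_nz[OF UV(1) assms(2)] by auto
  ultimately show ?thesis using UV(3) by (intro bexI[of _ "sm U L"]) auto
qed

lemma step_B:
  assumes "L \<in> skew_I \<sigma> \<delta> (insert Q S)" "L \<noteq> 0" "Q \<noteq> 0" "P \<noteq> 0" "skew_rdvd \<sigma> \<delta> Q P"
  shows "\<exists>M\<in>skew_I \<sigma> \<delta> (insert P S). M \<noteq> 0 \<and> degree M + degree Q \<le> degree L + degree P"
proof -
  obtain B where PB: "P = sm B Q" using assms(5) by (auto simp: skew_rdvd_def)
  have Bnz: "B \<noteq> 0" using PB assms(4) by auto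
  obtain C where LC: "L = sm C Q" using assms(1) by (auto simp: skew_I_def skew_rdvd_def)
  have Cnz: "C \<noteq> 0" using LC assms(2) by auto
  obtain U V where UV: "U \<noteq> 0" "sm U C = sm V B" "degree U \<le> degree B"
    using ore[OF Cnz Bnz] by blast
  have LS: "L \<in> skew_I \<sigma> \<delta> S" using assms(1) by (simp add: skew_I_def)
  have "sm U L \<in> skew_I \<sigma> \<delta> S" using I_mult[OF LS] .
  moreover have "sm U L = sm V P" using UV(2) by (simp add: LC PB sm_assoc[symmetric])
  then have "skew_rdvd \<sigma> \<delta> P (sm U L)" by (auto simp: skew_rdvd_def)
  ultimately have "sm U L \<in> skew_I \<sigma> \<delta> (insert P S)" by (simp add: skew_I_def)
  moreover have "sm U L \<noteq> 0" "degree (sm U L) = degree U + degree L"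
    using sm_nz[OF UV(1) assms(2)] by auto
  moreover have "degree P = degree B + degree Q" using sm_nz(2)[OF Bnz assms(3)] PB by simp
  ultimately show ?thesis using UV(3) by (intro bexI[of _ "sm U L"]) auto
qed

lemma chain_A:
  assumes "finite Z" "0 \<notin> Z" "L \<in> skew_I \<sigma> \<delta> Y" "L \<noteq> 0"
  shows "\<exists>M\<in>skew_I \<sigma> \<delta> (Y \<union> Z). M \<noteq> 0 \<and> degree M \<le> degree L + (\<Sum>P\<in>Z. degree P)"
  using assms
proof (induct Z rule: finite_induct)
  case empty then show ?case by auto
next
  case (insert P Z)
  then obtain M where M: "M \<in> skew_I \<sigma> \<delta> (Y \<union> Z)" "M \<noteq> 0" "degree M \<le> degree L + (\<Sum>P\<in>Z. degree P)"
    by auto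
  have "P \<noteq> 0" using insert by auto
  from step_A[OF M(1,2) this] obtain M' where
    "M' \<in> skew_I \<sigma> \<delta> (insert P (Y \<union> Z))" "M' \<noteq> 0" "degree M' \<le> degree M + degree P" by blast
  then show ?case using M(3) insert(1,2) by (intro bexI[of _ M']) auto
qed

lemma chain_B:
  assumes "finite \<Psi>" "\<forall>Q\<in>\<Psi>. Q \<noteq> 0 \<and> f Q \<noteq> 0 \<and> skew_rdvd \<sigma> \<delta> Q (f Q)"
    "L \<in> skew_I \<sigma> \<delta> (X \<union> \<Psi>)" "L \<noteq> 0"
  shows "\<exists>M\<in>skew_I \<sigma> \<delta> (X \<union> f ` \<Psi>). M \<noteq> 0 \<and>
           degree M + (\<Sum>Q\<in>\<Psi>. degree Q) \<le> degree L + (\<Sum>Q\<in>\<Psi>. degree (f Q))"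
  using assms
proof (induct \<Psi> arbitrary: X rule: finite_induct)
  case empty then show ?case by auto
next
  case (insert Q0 \<Psi>)
  have "L \<in> skew_I \<sigma> \<delta> (insert Q0 X \<union> \<Psi>)" using insert(5) by simp
  from insert(3)[OF _ this insert(6)] insert(4) obtain M where
    M: "M \<in> skew_I \<sigma> \<delta> (insert Q0 (X \<union> f ` \<Psi>))" "M \<noteq> 0"
       "degree M + (\<Sum>Q\<in>\<Psi>. degree Q) \<le> degree L + (\<Sum>Q\<in>\<Psi>. degree (f Q))"
    by auto
  have h: "Q0 \<noteq> 0" "f Q0 \<noteq> 0" "skew_rdvd \<sigma> \<delta> Q0 (f Q0)" using insert(4) by auto
  from step_B[OF M(1,2) h] obtain M' where
    "M' \<in> skew_I \<sigma> \<delta> (insert (f Q0) (X \<union> f ` \<Psi>))" "M' \<noteq> 0"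
    "degree M' + degree Q0 \<le> degree M + degree (f Q0)" by blast
  then show ?case using M(3) insert(1,2) by (intro bexI[of _ M']) auto
qed

lemma F_props:
  assumes "G \<in> skew_I \<sigma> \<delta> S" "G \<noteq> 0"
  shows "skew_F \<sigma> \<delta> S \<in> skew_I \<sigma> \<delta> S \<and> lead_coeff (skew_F \<sigma> \<delta> S) = 1 \<and>
    (\<forall>G'\<in>skew_I \<sigma> \<delta> S. G' \<noteq> 0 \<longrightarrow> degree (skew_F \<sigma> \<delta> S) \<le> degree G')"
proof -
  have ne: "skew_I \<sigma> \<delta> S \<noteq> {0}" using assms by auto
  obtain G0 where G0: "G0 \<in> skew_I \<sigma> \<delta> S \<and> G0 \<noteq> 0"
    "\<forall>G'. G' \<in> skew_I \<sigma> \<delta> S \<and> G' \<noteq> 0 \<longrightarrow> degree G0 \<le> degree G'"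
    using ex_has_least_nat[of "\<lambda>G. G \<in> skew_I \<sigma> \<delta> S \<and> G \<noteq> 0" G degree] assms by blast
  define c where "c = inverse (lead_coeff G0)"
  have cnz: "c \<noteq> 0" using G0 by (simp add: c_def)
  have W: "sm [:c:] G0 \<in> skew_I \<sigma> \<delta> S" using I_mult G0 by blast
  have "sm [:c:] G0 \<noteq> 0" "degree (sm [:c:] G0) = degree G0"
    using sm_nz[of "[:c:]" G0] cnz G0 by auto
  moreover have "lead_coeff (sm [:c:] G0) = 1"
    using sm_lc[of "[:c:]" G0] cnz G0 by (simp add: c_def)
  ultimately have "\<exists>F. F \<in> skew_I \<sigma> \<delta> S \<and> lead_coeff F = 1 \<and>
        (\<forall>G\<in>skew_I \<sigma> \<delta> S. G \<noteq> 0 \<longrightarrow> degree F \<le> degree G)"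
    using W G0 by (intro exI[of _ "sm [:c:] G0"]) auto
  from someI_ex[OF this] show ?thesis using ne by (simp add: skew_F_def)
qed

end

theorem mainTheorem4:
  fixes \<sigma> \<delta> :: "'a::division_ring \<Rightarrow> 'a"
    and \<Psi> \<Omega> :: "'a poly set"
  assumes "ring_endo \<sigma>"
    and "sigma_derivation \<sigma> \<delta>"
    and "finite \<Psi>" and "\<Psi> \<noteq> {}" and "finite \<Omega>" and "\<Omega> \<noteq> {}"
    and "\<forall>Q\<in>\<Psi>. degree Q \<ge> 1" and "\<forall>P\<in>\<Omega>. degree P \<ge> 1"
    and "skew_le \<sigma> \<delta> \<Psi> \<Omega>"
    and "P_independent \<sigma> \<delta> \<Omega>"
  shows "P_independent \<sigma> \<delta> \<Psi>"
proof -
  interpret skew \<sigma> \<delta> using assms(1,2) by unfold_locales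
  have nzPsi: "\<forall>Q\<in>\<Psi>. Q \<noteq> 0" using assms(7) by auto
  have nzOm: "\<forall>P\<in>\<Omega>. P \<noteq> 0" using assms(8) by auto
  obtain T f where Tf: "T \<subseteq> \<Omega>" "bij_betw f \<Psi> T" "\<forall>Q\<in>\<Psi>. skew_rdvd \<sigma> \<delta> Q (f Q)"
  proof -
    have "\<Psi> \<subseteq> \<Psi> \<and> finite \<Psi> \<and> \<Psi> \<noteq> {}" using assms(3,4) by simp
    then have "\<exists>T f. T \<subseteq> \<Omega> \<and> bij_betw f \<Psi> T \<and> (\<forall>Q\<in>\<Psi>. skew_rdvd \<sigma> \<delta> Q (f Q))"
      using assms(9) unfolding skew_le_def by blast
    then show ?thesis using that by blast
  qed
  have fnz: "\<forall>Q\<in>\<Psi>. f Q \<noteq> 0" using Tf(1,2) nzOm by (auto simp: bij_betw_def)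
  have one: "[:1:] \<in> skew_I \<sigma> \<delta> {}" by (simp add: skew_I_def)
  obtain M0 where M0: "M0 \<in> skew_I \<sigma> \<delta> \<Psi>" "M0 \<noteq> 0" "degree M0 \<le> (\<Sum>P\<in>\<Psi>. degree P)"
  proof -
    have "0 \<notin> \<Psi>" using nzPsi by auto
    from chain_A[OF assms(3) this one] show ?thesis using that by auto
  qed
  obtain G where G: "G \<in> skew_I \<sigma> \<delta> \<Psi> \<and> G \<noteq> 0"
    "\<forall>G'. G' \<in> skew_I \<sigma> \<delta> \<Psi> \<and> G' \<noteq> 0 \<longrightarrow> degree G \<le> degree G'"
    using ex_has_least_nat[of "\<lambda>G. G \<in> skew_I \<sigma> \<delta> \<Psi> \<and> G \<noteq> 0" M0 degree] M0 by blast
  have Gle: "degree G \<le> (\<Sum>P\<in>\<Psi>. degree P)" using G(2) M0 by fastforce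
  have "\<forall>Q\<in>\<Psi>. Q \<noteq> 0 \<and> f Q \<noteq> 0 \<and> skew_rdvd \<sigma> \<delta> Q (f Q)" using nzPsi fnz Tf(3) by auto
  from chain_B[OF assms(3) this, of G "{}"] G obtain M1 where
    M1: "M1 \<in> skew_I \<sigma> \<delta> T" "M1 \<noteq> 0"
    "degree M1 + (\<Sum>Q\<in>\<Psi>. degree Q) \<le> degree G + (\<Sum>Q\<in>\<Psi>. degree (f Q))"
    using Tf(2) by (auto simp: bij_betw_def)
  have sT: "(\<Sum>Q\<in>\<Psi>. degree (f Q)) = (\<Sum>P\<in>T. degree P)"
    using sum.reindex_bij_betw[OF Tf(2), of degree] by simp
  have finT: "finite (\<Omega> - T)" using assms(5) by simp
  have "0 \<notin> \<Omega> - T" using nzOm by auto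
  from chain_A[OF finT this M1(1,2)] obtain M2 where
    M2: "M2 \<in> skew_I \<sigma> \<delta> \<Omega>" "M2 \<noteq> 0" "degree M2 \<le> degree M1 + (\<Sum>P\<in>\<Omega> - T. degree P)"
    using Tf(1) by (auto simp: Un_absorb1 Un_Diff_cancel)
  have FO: "degree (skew_F \<sigma> \<delta> \<Omega>) \<le> degree M2" using F_props[OF M2(1,2)] M2 by blast
  have "degree (skew_F \<sigma> \<delta> \<Omega>) = (\<Sum>P\<in>\<Omega>. degree P)" using assms(10) by (simp add: P_independent_def)
  also have "\<dots> = (\<Sum>P\<in>T. degree P) + (\<Sum>P\<in>\<Omega> - T. degree P)"
    using sum.subset_diff[OF Tf(1) assms(5), of degree] by (simp add: add.commute)
  finally have "(\<Sum>P\<in>\<Psi>. degree P) \<le> degree G" using FO M2(3) M1(3) sT by linarith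
  with Gle have dG: "degree G = (\<Sum>P\<in>\<Psi>. degree P)" by simp
  have FP: "skew_F \<sigma> \<delta> \<Psi> \<in> skew_I \<sigma> \<delta> \<Psi>" "lead_coeff (skew_F \<sigma> \<delta> \<Psi>) = 1"
    "degree (skew_F \<sigma> \<delta> \<Psi>) \<le> degree G"
    using F_props[of G \<Psi>] G by auto
  then have "skew_F \<sigma> \<delta> \<Psi> \<noteq> 0" by auto
  then have "degree G \<le> degree (skew_F \<sigma> \<delta> \<Psi>)" using G(2) FP(1) by blast
  then have "degree (skew_F \<sigma> \<delta> \<Psi>) = (\<Sum>P\<in>\<Psi>. degree P)" using FP(3) dG by simp
  moreover have "skew_I \<sigma> \<delta> \<Psi> \<noteq> {0}" using G by auto
  ultimately show ?thesis using assms(3) by (simp add: P_independent_def)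
qed

end
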